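(* If $G$ is a finite simple graph in which every unit sphere $S(x)$ belongs to $\mathcal{S}_2$ (a three-dimensional geometric graph without boundary), then $\chi(G)=0$.
   Context: For a vertex $x$, the unit sphere $S(x)$ is the subgraph induced by the neighbors of $x$. A graph is contractible if it is $K_1$, or, inductively, if there is a vertex $x$ such that both $S(x)$ and the subgraph induced by $V\setminus\{x\}$ are contractible. Let $\mathcal{G}_0$ be the class of graphs without edges, $\mathcal{S}_0$ those with exactly two vertices, $\mathcal{B}_0$ those with exactly one vertex. For $d\ge1$: $\mathcal{G}_d$ is the class of graphs in which every $S(x)$ lies in $\mathcal{S}_{d-1}\cup\mathcal{B}_{d-1}$, with boundary $\delta G$ induced by vertices $x$ with $S(x)\in\mathcal{B}_{d-1}$ and nonempty interior; $\mathcal{B}_d$ is the class of contractible graphs in $\mathcal{G}_d$ with boundary in $\mathcal{S}_{d-1}$; $\mathcal{S}_d$ is the class of non-contractible graphs in $\mathcal{G}_d$ such that removing any single vertex yields a graph in $\mathcal{B}_d$. The Euler characteristic is $\chi(G)=\sum_{k\ge0}(-1)^k v_k$, where $v_k$ is the number of complete subgraphs $K_{k+1}$ of $G$. *)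

theory Defs
  imports Main
begin

text \<open>A finite simple graph is represented by a vertex set V together with an
adjacency relation E (assumed symmetric and irreflexive on V).  All graphs
occurring in the definitions are induced subgraphs, so they are represented by
their vertex sets W, with adjacency E restricted to W.\<close>

definition unit_sphere :: "('a \<Rightarrow> 'a \<Rightarrow> bool) \<Rightarrow> 'a set \<Rightarrow> 'a \<Rightarrow> 'a set" where
  "unit_sphere E V x = {y \<in> V. E x y}"

inductive contractible :: "('a \<Rightarrow> 'a \<Rightarrow> bool) \<Rightarrow> 'a set \<Rightarrow> bool" for E where
  single: "contractible E {x}"
| step: "x \<in> V \<Longrightarrow> contractible E (unit_sphere E V x) \<Longrightarrow> contractible E (V - {x})
         \<Longrightarrow> contractible E V"

definition no_edges :: "('a \<Rightarrow> 'a \<Rightarrow> bool) \<Rightarrow> 'a set \<Rightarrow> bool" where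
  "no_edges E V \<longleftrightarrow> (\<forall>x\<in>V. \<forall>y\<in>V. \<not> E x y)"

definition boundary :: "('a set \<Rightarrow> bool) \<Rightarrow> ('a \<Rightarrow> 'a \<Rightarrow> bool) \<Rightarrow> 'a set \<Rightarrow> 'a set" where
  "boundary B E V = {x \<in> V. B (unit_sphere E V x)}"

text \<open>Membership in G_d given the classes S_{d-1} and B_{d-1}: every unit sphere
lies in S_{d-1} or B_{d-1}, and the interior (vertices not on the boundary) is nonempty.\<close>
definition geom_step :: "('a set \<Rightarrow> bool) \<Rightarrow> ('a set \<Rightarrow> bool) \<Rightarrow> ('a \<Rightarrow> 'a \<Rightarrow> bool) \<Rightarrow> 'a set \<Rightarrow> bool" where
  "geom_step S B E V \<longleftrightarrow>
     (\<forall>x\<in>V. S (unit_sphere E V x) \<or> B (unit_sphere E V x)) \<and> (\<exists>x\<in>V. \<not> B (unit_sphere E V x))"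

primrec SB_classes :: "nat \<Rightarrow> ('a \<Rightarrow> 'a \<Rightarrow> bool) \<Rightarrow> ('a set \<Rightarrow> bool) \<times> ('a set \<Rightarrow> bool)" where
  "SB_classes 0 E = ((\<lambda>V. no_edges E V \<and> card V = 2), (\<lambda>V. no_edges E V \<and> card V = 1))"
| "SB_classes (Suc d) E =
     (let S = fst (SB_classes d E); B = snd (SB_classes d E);
          Bn = (\<lambda>V. contractible E V \<and> geom_step S B E V \<and> S (boundary B E V))
      in ((\<lambda>V. \<not> contractible E V \<and> geom_step S B E V \<and> (\<forall>x\<in>V. Bn (V - {x}))), Bn))"

definition sphere_class :: "nat \<Rightarrow> ('a \<Rightarrow> 'a \<Rightarrow> bool) \<Rightarrow> 'a set \<Rightarrow> bool" where
  "sphere_class d E = fst (SB_classes d E)"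

definition ball_class :: "nat \<Rightarrow> ('a \<Rightarrow> 'a \<Rightarrow> bool) \<Rightarrow> 'a set \<Rightarrow> bool" where
  "ball_class d E = snd (SB_classes d E)"

definition is_clique :: "('a \<Rightarrow> 'a \<Rightarrow> bool) \<Rightarrow> 'a set \<Rightarrow> bool" where
  "is_clique E A \<longleftrightarrow> (\<forall>x\<in>A. \<forall>y\<in>A. x \<noteq> y \<longrightarrow> E x y)"

definition num_cliques :: "('a \<Rightarrow> 'a \<Rightarrow> bool) \<Rightarrow> 'a set \<Rightarrow> nat \<Rightarrow> nat" where
  "num_cliques E V k = card {A. A \<subseteq> V \<and> card A = k + 1 \<and> is_clique E A}"

definition euler_char :: "('a \<Rightarrow> 'a \<Rightarrow> bool) \<Rightarrow> 'a set \<Rightarrow> int" where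
  "euler_char E V = (\<Sum>k\<le>card V. (-1) ^ k * int (num_cliques E V k))"

end

theory Submission
  imports Defs
begin

definition Cl :: "('a \<Rightarrow> 'a \<Rightarrow> bool) \<Rightarrow> 'a set \<Rightarrow> nat \<Rightarrow> 'a set set" where
  "Cl E W k = {A. A \<subseteq> W \<and> card A = k \<and> is_clique E A}"

definition NN :: "('a \<Rightarrow> 'a \<Rightarrow> bool) \<Rightarrow> 'a set \<Rightarrow> nat \<Rightarrow> nat" where
  "NN E W k = card (Cl E W k)"

definition chiM :: "('a \<Rightarrow> 'a \<Rightarrow> bool) \<Rightarrow> nat \<Rightarrow> 'a set \<Rightarrow> int" where
  "chiM E M W = (\<Sum>j<M. (-1)^j * int (NN E W (Suc j)))"

lemma sphere_sub: "unit_sphere E W x \<subseteq> W"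
  unfolding unit_sphere_def by auto

lemma ball_contr: "ball_class d E W \<Longrightarrow> contractible E W"
proof (cases d)
  case 0
  assume "ball_class d E W"
  then have "card W = 1" using 0 by (simp add: ball_class_def)
  then obtain w where "W = {w}" using card_1_singletonE by blast
  then show ?thesis by (simp add: contractible.single)
next
  case (Suc d')
  assume "ball_class d E W"
  then show ?thesis using Suc by (simp add: ball_class_def Let_def)
qed

lemma sphere_Suc:
  "sphere_class (Suc d) E W = (\<not> contractible E W \<and> geom_step (sphere_class d E) (ball_class d E) E W
     \<and> (\<forall>x\<in>W. ball_class (Suc d) E (W - {x})))"
  by (simp add: sphere_class_def ball_class_def Let_def)

lemma sphere_sub_class:
  assumes "sphere_class (Suc d) E W" "x \<in> W"
  shows "sphere_class d E (unit_sphere E W x)"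
proof -
  have A: "\<not> contractible E W" "geom_step (sphere_class d E) (ball_class d E) E W"
    "ball_class (Suc d) E (W - {x})" using assms(1) assms(2) unfolding sphere_Suc by blast+
  have "sphere_class d E (unit_sphere E W x) \<or> ball_class d E (unit_sphere E W x)"
    using A(2) assms(2) unfolding geom_step_def by blast
  moreover have "\<not> ball_class d E (unit_sphere E W x)"
  proof
    assume "ball_class d E (unit_sphere E W x)"
    hence c1: "contractible E (unit_sphere E W x)" by (rule ball_contr)
    have c2: "contractible E (W - {x})" by (rule ball_contr[OF A(3)])
    have "contractible E W" by (rule contractible.step[OF assms(2) c1 c2])
    thus False using A(1) by blast
  qed
  ultimately show ?thesis by blast
qed

lemma sphere_nonempty:
  assumes "sphere_class (Suc d) E W" shows "\<exists>x. x \<in> W"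
  using assms unfolding sphere_Suc geom_step_def by blast

lemma sum_trunc:
  fixes f :: "nat \<Rightarrow> int"
  assumes "\<forall>j\<ge>K. f j = 0" "\<forall>j\<ge>M. f j = 0"
  shows "sum f {..<M} = sum f {..<K}"
proof -
  have "sum f {..<M} = sum f {..<max M K}"
    by (rule sum.mono_neutral_left) (use assms in auto)
  moreover have "sum f {..<K} = sum f {..<max M K}"
    by (rule sum.mono_neutral_left) (use assms in auto)
  ultimately show ?thesis by simp
qed

context
  fixes E :: "'a \<Rightarrow> 'a \<Rightarrow> bool" and V :: "'a set"
  assumes finV: "finite V" and symV: "\<forall>x\<in>V. \<forall>y\<in>V. E x y \<longleftrightarrow> E y x"
    and irrV: "\<forall>x\<in>V. \<not> E x x"
begin

lemma Cl_fin: "W \<subseteq> V \<Longrightarrow> finite (Cl E W k)"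
proof -
  assume "W \<subseteq> V"
  hence "finite W" using finV by (rule finite_subset)
  moreover have "Cl E W k \<subseteq> Pow W" by (auto simp: Cl_def)
  ultimately show ?thesis by (meson finite_Pow_iff finite_subset)
qed

lemma x_notin_sphere: "x \<in> V \<Longrightarrow> x \<notin> unit_sphere E W x"
  using irrV by (auto simp: unit_sphere_def)

lemma Cl_split:
  assumes "W \<subseteq> V" "x \<in> W"
  shows "{A \<in> Cl E W (Suc k). x \<in> A} = insert x ` Cl E (unit_sphere E W x) k"
proof
  show "insert x ` Cl E (unit_sphere E W x) k \<subseteq> {A \<in> Cl E W (Suc k). x \<in> A}"
  proof
    fix B assume "B \<in> insert x ` Cl E (unit_sphere E W x) k"
    then obtain A where B: "B = insert x A" and A: "A \<subseteq> unit_sphere E W x" "card A = k" "is_clique E A"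
      by (auto simp: Cl_def)
    have xA: "x \<notin> A" using A(1) x_notin_sphere[of x W] assms(1) assms(2) by auto
    have finA: "finite A" by (rule finite_subset[OF order_trans[OF A(1) order_trans[OF sphere_sub assms(1)]] finV])
    have "card B = Suc k" by (simp only: B card_insert_disjoint[OF finA xA] A(2))
    moreover have BW: "B \<subseteq> W" using B A(1) assms(2) sphere_sub[of E W x] by auto
    moreover have "is_clique E B"
      unfolding is_clique_def
    proof (intro ballI impI)
      fix y z assume yz: "y \<in> B" "z \<in> B" "y \<noteq> z"
      show "E y z"
      proof (cases "y = x")
        case True
        then have "z \<in> A" using yz B by auto
        then show ?thesis using True A(1) by (auto simp: unit_sphere_def)
      next
        case False
        then have yA: "y \<in> A" using yz B by auto
        show ?thesis
        proof (cases "z = x")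
          case True
          have "E x y" using yA A(1) by (auto simp: unit_sphere_def)
          moreover have "y \<in> V" "x \<in> V" using BW yz assms by auto
          ultimately show ?thesis using True symV by blast
        next
          case False
          then have "z \<in> A" using yz B by auto
          then show ?thesis using yA yz A(3) unfolding is_clique_def by blast
        qed
      qed
    qed
    ultimately show "B \<in> {A \<in> Cl E W (Suc k). x \<in> A}" using B by (auto simp: Cl_def)
  qed
next
  show "{A \<in> Cl E W (Suc k). x \<in> A} \<subseteq> insert x ` Cl E (unit_sphere E W x) k"
  proof
    fix B assume "B \<in> {A \<in> Cl E W (Suc k). x \<in> A}"
    hence B: "B \<subseteq> W" "card B = Suc k" "is_clique E B" "x \<in> B" by (auto simp: Cl_def)
    have finB: "finite B" using B(2) by (intro card_ge_0_finite) simp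
    let ?A = "B - {x}"
    have "?A \<subseteq> unit_sphere E W x" using B unfolding is_clique_def unit_sphere_def by auto
    moreover have "card ?A = k" using B finB by simp
    moreover have "is_clique E ?A" using B(3) unfolding is_clique_def by auto
    ultimately have "?A \<in> Cl E (unit_sphere E W x) k" by (simp add: Cl_def)
    moreover have "B = insert x ?A" using B(4) by auto
    ultimately show "B \<in> insert x ` Cl E (unit_sphere E W x) k" by blast
  qed
qed

lemma inj_ins:
  assumes "W \<subseteq> V" "x \<in> W"
  shows "inj_on (insert x) (Cl E (unit_sphere E W x) k)"
proof -
  have "\<forall>A \<in> Cl E (unit_sphere E W x) k. x \<notin> A"
    using x_notin_sphere assms by (auto simp: Cl_def)
  then show ?thesis unfolding inj_on_def by (metis Diff_insert_absorb)
qed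

lemma card_split:
  assumes "W \<subseteq> V" "x \<in> W"
  shows "card {A \<in> Cl E W (Suc k). x \<in> A} = NN E (unit_sphere E W x) k"
  using Cl_split[OF assms] inj_ins[OF assms] card_image unfolding NN_def by metis

lemma NN_split:
  assumes "W \<subseteq> V" "x \<in> W"
  shows "NN E W (Suc k) = NN E (W - {x}) (Suc k) + NN E (unit_sphere E W x) k"
proof -
  have eq: "Cl E W (Suc k) = Cl E (W-{x}) (Suc k) \<union> {A \<in> Cl E W (Suc k). x \<in> A}"
    by (auto simp: Cl_def)
  have dis: "Cl E (W-{x}) (Suc k) \<inter> {A \<in> Cl E W (Suc k). x \<in> A} = {}"
    by (auto simp: Cl_def)
  have f1: "finite (Cl E (W-{x}) (Suc k))" using assms(1) by (intro Cl_fin) auto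
  have f2: "finite {A \<in> Cl E W (Suc k). x \<in> A}" using Cl_fin assms by auto
  have "NN E W (Suc k) = card (Cl E (W-{x}) (Suc k)) + card {A \<in> Cl E W (Suc k). x \<in> A}"
    unfolding NN_def by (subst eq, rule card_Un_disjoint[OF f1 f2 dis])
  then show ?thesis using card_split[OF assms] unfolding NN_def by simp
qed

lemma NN_zero: "W \<subseteq> V \<Longrightarrow> NN E W 0 = 1"
proof -
  assume "W \<subseteq> V"
  hence "finite W" using finV by (rule finite_subset)
  hence c0: "\<And>A. A \<subseteq> W \<Longrightarrow> card A = 0 \<longleftrightarrow> A = {}" by (meson card_0_eq finite_subset)
  have "Cl E W 0 = {{}}" unfolding Cl_def is_clique_def using c0 by auto
  thus ?thesis by (simp add: NN_def)
qed

lemma NN_big: "W \<subseteq> V \<Longrightarrow> card W < k \<Longrightarrow> NN E W k = 0"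
proof -
  assume a: "W \<subseteq> V" "card W < k"
  have "finite W" using a(1) finV by (rule finite_subset)
  hence "Cl E W k = {}" using a by (auto simp: Cl_def dest: card_mono)
  thus ?thesis by (simp add: NN_def)
qed

lemma card_S: "W \<subseteq> V \<Longrightarrow> card (unit_sphere E W x) < Suc (card V)"
  using sphere_sub card_mono finV by (metis le_imp_less_Suc order_trans)

lemma chi_remove:
  assumes "W \<subseteq> V" "x \<in> W"
  shows "chiM E (Suc (card V)) W = chiM E (Suc (card V)) (W - {x}) + 1 - chiM E (Suc (card V)) (unit_sphere E W x)"
proof -
  define M where "M = Suc (card V)"
  define S where "S = unit_sphere E W x"
  have SV: "S \<subseteq> V" unfolding S_def by (rule order_trans[OF sphere_sub assms(1)])
  have "chiM E M W = (\<Sum>j<M. (-1)^j * int (NN E (W-{x}) (Suc j)) + (-1)^j * int (NN E S j))"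
    unfolding chiM_def S_def using NN_split[OF assms] by (simp add: algebra_simps)
  also have "\<dots> = chiM E M (W-{x}) + (\<Sum>j<M. (-1)^j * int (NN E S j))"
    unfolding chiM_def by (simp add: sum.distrib)
  also have "(\<Sum>j<M. (-1)^j * int (NN E S j)) = (\<Sum>j<Suc M. (-1)^j * int (NN E S j))"
  proof -
    have "NN E S M = 0" using NN_big[OF SV] card_S[OF assms(1), of x] unfolding M_def S_def by simp
    then show ?thesis by simp
  qed
  also have "\<dots> = 1 - chiM E M S"
    unfolding chiM_def by (subst sum.lessThan_Suc_shift) (simp add: NN_zero[OF SV] sum_negf del: sum.lessThan_Suc)
  finally show ?thesis unfolding M_def S_def by simp
qed

lemma chi_empty: "chiM E (Suc (card V)) {} = 0"
proof -
  have "\<And>j. NN E {} (Suc j) = 0" using NN_big by auto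
  thus ?thesis by (simp add: chiM_def)
qed

lemma contr_chi: "contractible E W \<Longrightarrow> W \<subseteq> V \<Longrightarrow> chiM E (Suc (card V)) W = 1"
proof (induction rule: contractible.induct)
  case (single x)
  have xx: "x \<in> {x}" by simp
  have "unit_sphere E {x} x = {}" using irrV single by (auto simp: unit_sphere_def)
  moreover have "chiM E (Suc (card V)) {x} = chiM E (Suc (card V)) ({x} - {x}) + 1 - chiM E (Suc (card V)) (unit_sphere E {x} x)"
    by (rule chi_remove[OF single xx])
  moreover have "{x} - {x} = {}" by simp
  ultimately have "chiM E (Suc (card V)) {x} = chiM E (Suc (card V)) {} + 1 - chiM E (Suc (card V)) {}"
    by metis
  then show ?case using chi_empty by linarith
next
  case (step x W)
  have WV: "W \<subseteq> V" using step.prems .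
  have SV: "unit_sphere E W x \<subseteq> V" by (rule order_trans[OF sphere_sub WV])
  have h1: "chiM E (Suc (card V)) (unit_sphere E W x) = 1" by (rule step.IH(1)[OF SV])
  have h2: "chiM E (Suc (card V)) (W - {x}) = 1" by (rule step.IH(2)[OF Diff_subset[THEN order_trans, OF WV]])
  have "chiM E (Suc (card V)) W = chiM E (Suc (card V)) (W - {x}) + 1 - chiM E (Suc (card V)) (unit_sphere E W x)"
    by (rule chi_remove[OF WV step.hyps(1)])
  then show ?case using h1 h2 by linarith
qed

lemma chi_trunc:
  assumes "W \<subseteq> V" "\<forall>k\<ge>Suc K. NN E W k = 0"
  shows "chiM E (Suc (card V)) W = (\<Sum>j<K. (-1)^j * int (NN E W (Suc j)))"
  unfolding chiM_def
proof (rule sum_trunc)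
  show "\<forall>j\<ge>K. (-1)^j * int (NN E W (Suc j)) = 0" using assms by auto
  have "card W \<le> card V" using assms(1) finV by (simp add: card_mono)
  then show "\<forall>j\<ge>Suc (card V). (-1)^j * int (NN E W (Suc j)) = 0"
    using NN_big[OF assms(1)] by auto
qed

lemma NN1: "W \<subseteq> V \<Longrightarrow> NN E W 1 = card W"
proof -
  assume "W \<subseteq> V"
  have "Cl E W 1 = (\<lambda>x. {x}) ` W" by (auto simp: Cl_def is_clique_def card_1_singleton_iff)
  moreover have "inj_on (\<lambda>x. {x}) W" by (auto simp: inj_on_def)
  ultimately show ?thesis by (simp add: NN_def card_image)
qed

lemma vanish:
  assumes "W \<subseteq> V" "\<forall>x\<in>W. \<forall>k\<ge>K. NN E (unit_sphere E W x) k = 0"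
  shows "\<forall>k\<ge>Suc K. NN E W k = 0"
proof (intro allI impI)
  fix k assume "Suc K \<le> k"
  then obtain k' where k: "k = Suc k'" "K \<le> k'" by (metis Suc_le_D Suc_le_mono)
  have "Cl E W (Suc k') = {}"
  proof (rule ccontr)
    assume "Cl E W (Suc k') \<noteq> {}"
    then obtain A where A: "A \<in> Cl E W (Suc k')" by blast
    hence "A \<noteq> {}" by (auto simp: Cl_def)
    then obtain x where x: "x \<in> A" by blast
    have xW: "x \<in> W" using A x by (auto simp: Cl_def)
    have "A \<in> insert x ` Cl E (unit_sphere E W x) k'" using Cl_split[OF assms(1) xW] A x by blast
    moreover have "Cl E (unit_sphere E W x) k' = {}"
    proof -
      have "NN E (unit_sphere E W x) k' = 0" using assms(2) xW k by blast
      moreover have "finite (Cl E (unit_sphere E W x) k')"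
        by (rule Cl_fin[OF order_trans[OF sphere_sub assms(1)]])
      ultimately show ?thesis by (simp add: NN_def)
    qed
    ultimately show False by simp
  qed
  then show "NN E W k = 0" using k by (simp add: NN_def)
qed

lemma dc:
  assumes "W \<subseteq> V"
  shows "(\<Sum>x\<in>W. NN E (unit_sphere E W x) k) = Suc k * NN E W (Suc k)"
proof -
  define C where "C = Cl E W (Suc k)"
  have finC: "finite C" unfolding C_def by (rule Cl_fin[OF assms])
  have finW: "finite W" using assms finV finite_subset by blast
  have "(\<Sum>x\<in>W. NN E (unit_sphere E W x) k) = (\<Sum>x\<in>W. card {A \<in> C. x \<in> A})"
    using card_split[OF assms] C_def by simp
  also have "\<dots> = (\<Sum>x\<in>W. \<Sum>A\<in>C. if x \<in> A then 1 else 0)"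
    using finC by (simp add: sum.inter_filter[symmetric])
  also have "\<dots> = (\<Sum>A\<in>C. \<Sum>x\<in>W. if x \<in> A then 1 else 0)"
    by (rule sum.swap)
  also have "\<dots> = (\<Sum>A\<in>C. Suc k)"
  proof (rule sum.cong)
    fix A assume "A \<in> C"
    hence A: "A \<subseteq> W" "card A = Suc k" by (auto simp: C_def Cl_def)
    have "(\<Sum>x\<in>W. if x \<in> A then 1 else 0) = card {x \<in> W. x \<in> A}"
      using finW by (simp add: sum.inter_filter[symmetric])
    also have "{x \<in> W. x \<in> A} = A" using A by auto
    finally show "(\<Sum>x\<in>W. if x \<in> A then 1 else (0::nat)) = Suc k" using A by simp
  qed simp
  also have "\<dots> = Suc k * NN E W (Suc k)" by (simp add: NN_def C_def)
  finally show ?thesis .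
qed

lemma dc_int:
  assumes "W \<subseteq> V"
  shows "(\<Sum>x\<in>W. int (NN E (unit_sphere E W x) k)) = int (Suc k) * int (NN E W (Suc k))"
  using dc[OF assms, of k] by (metis of_nat_sum of_nat_mult)

lemma S0_props:
  assumes "W \<subseteq> V" "sphere_class 0 E W"
  shows "chiM E (Suc (card V)) W = 2" "\<forall>k\<ge>2. NN E W k = 0"
proof -
  have ne: "no_edges E W" and c2: "card W = 2" using assms by (auto simp: sphere_class_def)
  show v: "\<forall>k\<ge>2. NN E W k = 0"
  proof (intro allI impI)
    fix k :: nat assume k: "2 \<le> k"
    have "Cl E W k = {}"
    proof (rule ccontr)
      assume "Cl E W k \<noteq> {}"
      then obtain A where A: "A \<subseteq> W" "card A = k" "is_clique E A" by (auto simp: Cl_def)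
      have "1 < card A" using A k by simp
      have finA: "finite A" using \<open>1 < card A\<close> by (intro card_ge_0_finite) simp
      have "A \<noteq> {}" using \<open>1 < card A\<close> by auto
      then obtain a where a: "a \<in> A" by blast
      have "card (A - {a}) = card A - 1" using a finA by simp
      hence "A - {a} \<noteq> {}" using \<open>1 < card A\<close> by (metis card.empty less_numeral_extra(3) zero_less_diff)
      then obtain b where "b \<in> A - {a}" by blast
      then have "a \<in> A" "b \<in> A" "a \<noteq> b" using a by auto
      then show False using A ne unfolding is_clique_def no_edges_def by blast
    qed
    then show "NN E W k = 0" by (simp add: NN_def)
  qed
  have "chiM E (Suc (card V)) W = (\<Sum>j<1. (-1)^j * int (NN E W (Suc j)))"
    by (rule chi_trunc[OF assms(1)]) (use v in auto)
  also have "\<dots> = 2" using NN1[OF assms(1)] c2 by simp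
  finally show "chiM E (Suc (card V)) W = 2" .
qed

lemma S1_props:
  assumes "W \<subseteq> V" "sphere_class 1 E W"
  shows "chiM E (Suc (card V)) W = 0" "\<forall>k\<ge>3. NN E W k = 0"
proof -
  have s: "sphere_class (Suc 0) E W" using assms by simp
  have sub: "\<And>x. x \<in> W \<Longrightarrow> sphere_class 0 E (unit_sphere E W x) \<and> unit_sphere E W x \<subseteq> V"
    using sphere_sub_class[OF s] order_trans[OF sphere_sub assms(1)] by simp
  show "\<forall>k\<ge>3. NN E W k = 0"
    using vanish[OF assms(1), of 2] sub S0_props by (simp add: numeral_3_eq_3)
  obtain x where x: "x \<in> W" using sphere_nonempty[OF s] by blast
  have "ball_class (Suc 0) E (W - {x})" using s x unfolding sphere_Suc by blast
  hence "contractible E (W - {x})" by (rule ball_contr)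
  hence "chiM E (Suc (card V)) (W - {x}) = 1" using contr_chi assms(1) by (meson Diff_subset order_trans)
  then show "chiM E (Suc (card V)) W = 0"
    using chi_remove[OF assms(1) x] sub[OF x] S0_props by simp
qed

lemma S2_props:
  assumes "W \<subseteq> V" "sphere_class 2 E W"
  shows "int (NN E W 1) - int (NN E W 2) + int (NN E W 3) = 2"
    "\<forall>k\<ge>4. NN E W k = 0"
    "2 * int (NN E W 2) = 3 * int (NN E W 3)"
proof -
  have s: "sphere_class (Suc 1) E W" using assms by (simp add: numeral_2_eq_2)
  have sub: "\<And>x. x \<in> W \<Longrightarrow> sphere_class 1 E (unit_sphere E W x) \<and> unit_sphere E W x \<subseteq> V"
    using sphere_sub_class[OF s] order_trans[OF sphere_sub assms(1)] by simp
  show v: "\<forall>k\<ge>4. NN E W k = 0"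
    using vanish[OF assms(1), of 3] sub S1_props by (simp add: numeral_eq_Suc)
  obtain x where x: "x \<in> W" using sphere_nonempty[OF s] by blast
  have "ball_class (Suc 1) E (W - {x})" using s x unfolding sphere_Suc by blast
  hence "contractible E (W - {x})" by (rule ball_contr)
  hence "chiM E (Suc (card V)) (W - {x}) = 1" using contr_chi assms(1) by (meson Diff_subset order_trans)
  then have c: "chiM E (Suc (card V)) W = 2"
    using chi_remove[OF assms(1) x] sub[OF x] S1_props by simp
  have "chiM E (Suc (card V)) W = (\<Sum>j<3. (-1)^j * int (NN E W (Suc j)))"
    by (rule chi_trunc[OF assms(1)]) (use v in auto)
  then show "int (NN E W 1) - int (NN E W 2) + int (NN E W 3) = 2"
    using c by (simp add: numeral_eq_Suc)
  have e: "\<And>y. y \<in> W \<Longrightarrow> int (NN E (unit_sphere E W y) 1) - int (NN E (unit_sphere E W y) 2) = 0"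
  proof -
    fix y assume y: "y \<in> W"
    have U: "unit_sphere E W y \<subseteq> V" "sphere_class 1 E (unit_sphere E W y)" using sub[OF y] by auto
    have "chiM E (Suc (card V)) (unit_sphere E W y) = (\<Sum>j<2. (-1)^j * int (NN E (unit_sphere E W y) (Suc j)))"
      by (rule chi_trunc[OF U(1)]) (use S1_props(2)[OF U] in auto)
    then show "int (NN E (unit_sphere E W y) 1) - int (NN E (unit_sphere E W y) 2) = 0"
      using S1_props(1)[OF U] by (simp add: numeral_eq_Suc)
  qed
  have "(\<Sum>y\<in>W. int (NN E (unit_sphere E W y) 1) - int (NN E (unit_sphere E W y) 2)) = 0"
    using e by simp
  then have "(\<Sum>y\<in>W. int (NN E (unit_sphere E W y) 1)) - (\<Sum>y\<in>W. int (NN E (unit_sphere E W y) 2)) = 0"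
    by (simp add: sum_subtractf)
  then show "2 * int (NN E W 2) = 3 * int (NN E W 3)"
    using dc_int[OF assms(1), of 1] dc_int[OF assms(1), of 2] by (simp add: numeral_eq_Suc)
qed

lemma main_aux:
  assumes "\<forall>x\<in>V. sphere_class 2 E (unit_sphere E V x)"
  shows "euler_char E V = 0"
proof -
  let ?S = "\<lambda>x. unit_sphere E V x"
  have SV: "\<And>x. ?S x \<subseteq> V" by (rule sphere_sub)
  have v: "\<forall>k\<ge>5. NN E V k = 0"
    using vanish[of V 4] S2_props(2) SV assms by (simp add: numeral_eq_Suc)
  have e1: "(\<Sum>x\<in>V. int (NN E (?S x) 1) - int (NN E (?S x) 2) + int (NN E (?S x) 3)) = (\<Sum>x\<in>V. 2)"
    using S2_props(1) SV assms by simp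
  have e2: "(\<Sum>x\<in>V. 2 * int (NN E (?S x) 2) - 3 * int (NN E (?S x) 3)) = 0"
    using S2_props(3) SV assms by simp
  have d1: "(\<Sum>x\<in>V. int (NN E (?S x) 1)) = 2 * int (NN E V 2)"
    using dc_int[of V 1] by (simp add: numeral_eq_Suc)
  have d2: "(\<Sum>x\<in>V. int (NN E (?S x) 2)) = 3 * int (NN E V 3)"
    using dc_int[of V 2] by (simp add: numeral_eq_Suc)
  have d3: "(\<Sum>x\<in>V. int (NN E (?S x) 3)) = 4 * int (NN E V 4)"
    using dc_int[of V 3] by (simp add: numeral_eq_Suc)
  have a1: "2 * int (NN E V 2) - 3 * int (NN E V 3) + 4 * int (NN E V 4) = 2 * int (card V)"
    using e1 d1 d2 d3 by (simp add: sum.distrib sum_subtractf)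
  have a2: "2 * (3 * int (NN E V 3)) - 3 * (4 * int (NN E V 4)) = 0"
    using e2 d2 d3 by (simp add: sum_subtractf sum_distrib_left[symmetric])
  have n1: "NN E V 1 = card V" using NN1 by simp
  have "euler_char E V = chiM E (Suc (card V)) V"
    unfolding euler_char_def chiM_def num_cliques_def NN_def Cl_def
    by (simp add: lessThan_Suc_atMost)
  also have "\<dots> = (\<Sum>j<4. (-1)^j * int (NN E V (Suc j)))"
    by (rule chi_trunc) (use v in auto)
  also have "\<dots> = int (NN E V 1) - int (NN E V 2) + int (NN E V 3) - int (NN E V 4)"
    by (simp add: numeral_eq_Suc)
  finally show ?thesis using a1 a2 n1 by linarith
qed

end

theorem mainTheorem5:
  fixes E :: "'a \<Rightarrow> 'a \<Rightarrow> bool" and V :: "'a set"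
  assumes "finite V"
    and "\<forall>x\<in>V. \<forall>y\<in>V. E x y \<longleftrightarrow> E y x"
    and "\<forall>x\<in>V. \<not> E x x"
    and "\<forall>x\<in>V. sphere_class 2 E (unit_sphere E V x)"
  shows "euler_char E V = 0"
  using main_aux[OF assms(1,2,3) assms(4)] .

end
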